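(* Let $A$ be a wqo and let $A_1,\dots,A_m$ be a quasi-incomparable family of subsets of $A$. Then $\mathbf{w}(A)\ge \mathbf{w}(A_m)+\mathbf{w}(A_{m-1})+\dots+\mathbf{w}(A_1)$, where $+$ is ordinary ordinal addition.
   Context: A wqo is a quasi-order with no infinite bad sequence (a sequence $x_0,x_1,\dots$ is bad if there are no $i<j$ with $x_i\le x_j$). $x\perp y$ means neither $x\le y$ nor $y\le x$. The width $\mathbf{w}(A)$ of a wqo $A$ is the rank of the forest $\mathrm{Inco}(A)$ of nonempty finite sequences of pairwise incomparable elements ordered by initial segment, i.e. $\mathbf{w}(A)=\sup_{s}(r(s)+1)$ where $r(s)=\sup\{r(t)+1: t \text{ child of } s\}$; subsets of $A$ carry the induced order. For subsets $S,T\subseteq A$, write $S\perp T$ if $s\perp t$ for all $s\in S,t\in T$. A sequence $A_1,\dots,A_m$ of subsets of $A$ is a quasi-incomparable family if for every $i\in[1,m]$ and every finite $Y\subseteq A_1\cup\dots\cup A_{i-1}$ there exists $A_i'\subseteq A_i$ such that $A_i'$ (with the induced order) is order-isomorphic to $A_i$ and $A_i'\perp Y$. (This notion depends on the numbering of the $A_i$.) *)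

theory Defs
  imports Main
begin

text \<open>Quasi-orders are given by a type of class preorder; a wqo is a subset A of
such a type (with the induced order) having no infinite bad sequence.
Ordinals are represented, as in Isabelle's BNF cardinal library, by
well-order relations, compared with the library relation \<open>ordLeq\<close> (existence of an order embedding).\<close>

definition incomp :: "'a::preorder \<Rightarrow> 'a \<Rightarrow> bool" where
  "incomp x y \<longleftrightarrow> \<not> x \<le> y \<and> \<not> y \<le> x"

definition wqo_on :: "'a::preorder set \<Rightarrow> bool" where
  "wqo_on A \<longleftrightarrow> (\<forall>f::nat \<Rightarrow> 'a. (\<forall>i. f i \<in> A) \<longrightarrow> (\<exists>i j. i < j \<and> f i \<le> f j))"

definition Inco :: "'a::preorder set \<Rightarrow> 'a list set" where
  "Inco A = {s. s \<noteq> [] \<and> set s \<subseteq> A \<and>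
      (\<forall>i<length s. \<forall>j<length s. i \<noteq> j \<longrightarrow> incomp (s ! i) (s ! j))}"

definition inco_child :: "'a::preorder set \<Rightarrow> 'a list \<Rightarrow> 'a list \<Rightarrow> bool" where
  "inco_child A t s \<longleftrightarrow> s \<in> Inco A \<and> t \<in> Inco A \<and> (\<exists>x. t = s @ [x])"

text \<open>Comparison of ranks: \<open>rank_le A s t\<close> means r(s) \<le> r(t), where
r(s) = sup{r(t)+1 : t child of s}.  Since r(s) \<le> r(t) iff every child s' of s
has r(s') < r(t) iff for every child s' of s there is a child t' of t with
r(s') \<le> r(t'), this is the least relation closed under the rule below
(the forest being well-founded when A is a wqo).\<close>
inductive rank_le :: "'a::preorder set \<Rightarrow> 'a list \<Rightarrow> 'a list \<Rightarrow> bool" for A where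
  "s \<in> Inco A \<Longrightarrow> t \<in> Inco A \<Longrightarrow>
   (\<And>s'. inco_child A s' s \<Longrightarrow> \<exists>t'. inco_child A t' t \<and> rank_le A s' t') \<Longrightarrow>
   rank_le A s t"

definition rank_classes :: "'a::preorder set \<Rightarrow> 'a list set set" where
  "rank_classes A = {{t \<in> Inco A. rank_le A s t \<and> rank_le A t s} | s. s \<in> Inco A}"

text \<open>The width w(A) = sup_s (r(s)+1), i.e. the order type of the set of ranks
(which is an initial segment of the ordinals), as a well-order on rank classes.\<close>
definition width :: "'a::preorder set \<Rightarrow> 'a list set rel" where
  "width A = {(C, D). C \<in> rank_classes A \<and> D \<in> rank_classes A \<and>
                 (\<exists>s\<in>C. \<exists>t\<in>D. rank_le A s t)}"

text \<open>Ordinal sum W m + W (m-1) + ... + W 1 of well-orders (index m first).\<close>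
definition osum_desc :: "nat \<Rightarrow> (nat \<Rightarrow> 'b rel) \<Rightarrow> (nat \<times> 'b) rel" where
  "osum_desc m W = {((i, x), (j, y)). i \<in> {1..m} \<and> j \<in> {1..m} \<and>
       x \<in> Field (W i) \<and> y \<in> Field (W j) \<and> (j < i \<or> (i = j \<and> (x, y) \<in> W i))}"

definition order_isomorphic :: "'a::preorder set \<Rightarrow> 'a set \<Rightarrow> bool" where
  "order_isomorphic S T \<longleftrightarrow>
     (\<exists>f. bij_betw f S T \<and> (\<forall>x\<in>S. \<forall>y\<in>S. x \<le> y \<longleftrightarrow> f x \<le> f y))"

definition set_incomp :: "'a::preorder set \<Rightarrow> 'a set \<Rightarrow> bool" where
  "set_incomp S T \<longleftrightarrow> (\<forall>s\<in>S. \<forall>t\<in>T. incomp s t)"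

definition quasi_incomparable_family :: "'a::preorder set \<Rightarrow> nat \<Rightarrow> (nat \<Rightarrow> 'a set) \<Rightarrow> bool" where
  "quasi_incomparable_family A m Af \<longleftrightarrow>
     (\<forall>i\<in>{1..m}. Af i \<subseteq> A) \<and>
     (\<forall>i\<in>{1..m}. \<forall>Y. finite Y \<and> Y \<subseteq> (\<Union>k\<in>{1..<i}. Af k) \<longrightarrow>
        (\<exists>A'. A' \<subseteq> Af i \<and> order_isomorphic (Af i) A' \<and> set_incomp A' Y))"

end

theory Submission
  imports Defs
begin

definition chrel :: "'a::preorder set \<Rightarrow> ('a list \<times> 'a list) set" where
  "chrel B = {(t,s). inco_child B t s}"

lemma incomp_sym: "incomp x y \<Longrightarrow> incomp y x" unfolding incomp_def by auto

lemma Inco_prefix: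
  assumes "a @ b \<in> Inco B" "a \<noteq> []" shows "a \<in> Inco B"
proof -
  have "\<forall>i<length a. \<forall>j<length a. i \<noteq> j \<longrightarrow> incomp (a ! i) (a ! j)"
  proof (intro allI impI)
    fix i j assume "i < length a" "j < length a" "i \<noteq> j"
    with assms(1) have "incomp ((a@b) ! i) ((a@b) ! j)" unfolding Inco_def by auto
    thus "incomp (a ! i) (a ! j)" using \<open>i < length a\<close> \<open>j < length a\<close> by (simp add: nth_append)
  qed
  thus ?thesis using assms unfolding Inco_def by auto
qed

lemma Inco_set_incomp:
  assumes "s \<in> Inco B" "x \<in> set s" "y \<in> set s" "x \<noteq> y" shows "incomp x y"
proof -
  obtain i j where "i < length s" "j < length s" "x = s ! i" "y = s ! j"
    using assms by (metis in_set_conv_nth)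
  thus ?thesis using assms unfolding Inco_def by auto
qed

lemma Inco_iff:
  "s \<in> Inco B \<longleftrightarrow> s \<noteq> [] \<and> set s \<subseteq> B \<and> distinct s \<and> (\<forall>x\<in>set s. \<forall>y\<in>set s. x \<noteq> y \<longrightarrow> incomp x y)"
proof
  assume s: "s \<in> Inco B"
  have "distinct s"
  proof (subst distinct_conv_nth, intro allI impI)
    fix i j assume "i < length s" "j < length s" "i \<noteq> j"
    hence "incomp (s!i) (s!j)" using s unfolding Inco_def by auto
    thus "s ! i \<noteq> s ! j" unfolding incomp_def by auto
  qed
  thus "s \<noteq> [] \<and> set s \<subseteq> B \<and> distinct s \<and> (\<forall>x\<in>set s. \<forall>y\<in>set s. x \<noteq> y \<longrightarrow> incomp x y)"
    using s Inco_set_incomp[OF s] unfolding Inco_def by auto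
next
  assume "s \<noteq> [] \<and> set s \<subseteq> B \<and> distinct s \<and> (\<forall>x\<in>set s. \<forall>y\<in>set s. x \<noteq> y \<longrightarrow> incomp x y)"
  hence h: "s \<noteq> []" "set s \<subseteq> B" "distinct s" "\<forall>x\<in>set s. \<forall>y\<in>set s. x \<noteq> y \<longrightarrow> incomp x y" by auto
  have "\<forall>i<length s. \<forall>j<length s. i \<noteq> j \<longrightarrow> incomp (s ! i) (s ! j)"
  proof (intro allI impI)
    fix i j assume "i < length s" "j < length s" "i \<noteq> j"
    moreover hence "s ! i \<noteq> s ! j" using h(3) nth_eq_iff_index_eq by blast
    ultimately show "incomp (s ! i) (s ! j)" using h(4) nth_mem by blast
  qed
  thus "s \<in> Inco B" unfolding Inco_def using h by blast
qed

lemma wf_chrel: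
  assumes W: "wqo_on B" shows "wf (chrel B)"
proof (rule ccontr)
  assume "\<not> wf (chrel B)"
  then obtain f where f: "\<And>i. inco_child B (f (Suc i)) (f i)"
    unfolding wf_iff_no_infinite_down_chain chrel_def by auto
  have len: "length (f (Suc i)) = Suc (length (f i))" for i
    using f[of i] unfolding inco_child_def by auto
  have ext: "\<exists>w. f (i + k) = f i @ w" for i k
  proof (induction k)
    case 0 thus ?case by auto
  next
    case (Suc k)
    then obtain w where w: "f (i+k) = f i @ w" by blast
    obtain x where x: "f (Suc (i+k)) = f (i+k) @ [x]" using f[of "i+k"] unfolding inco_child_def by blast
    have "f (i + Suc k) = f i @ (w @ [x])" using w x by simp
    thus ?case by blast
  qed
  define g where "g i = f (Suc i) ! length (f i)" for i
  have lenmono: "i < j \<Longrightarrow> length (f i) < length (f j)" for i j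
  proof (induction j)
    case 0 thus ?case by auto
  next
    case (Suc j) thus ?case using len[of j] by (cases "i = j") auto
  qed
  have gin: "g i \<in> set (f (Suc j))" if "i \<le> j" for i j
  proof -
    obtain w where w: "f (Suc i + (j - i)) = f (Suc i) @ w" using ext by blast
    have "Suc i + (j - i) = Suc j" using that by auto
    hence "f (Suc j) = f (Suc i) @ w" using w by simp
    moreover have "length (f i) < length (f (Suc i))" using len by auto
    ultimately have "g i = f (Suc j) ! length (f i)" unfolding g_def by (simp add: nth_append)
    moreover have "length (f i) < length (f (Suc j))" using lenmono[of i "Suc j"] that by auto
    ultimately show ?thesis by auto
  qed
  have gpos: "g i = f (Suc j) ! length (f i)" if "i \<le> j" for i j
  proof -
    obtain w where w: "f (Suc i + (j - i)) = f (Suc i) @ w" using ext by blast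
    have "Suc i + (j - i) = Suc j" using that by auto
    hence "f (Suc j) = f (Suc i) @ w" using w by simp
    moreover have "length (f i) < length (f (Suc i))" using len by auto
    ultimately show ?thesis unfolding g_def by (simp add: nth_append)
  qed
  have Inc: "f (Suc j) \<in> Inco B" for j using f[of j] unfolding inco_child_def by auto
  have gB: "g i \<in> B" for i using gin[of i i] Inc[of i] unfolding Inco_def by auto
  have "incomp (g i) (g j)" if "i < j" for i j
  proof -
    have "length (f i) < length (f j)" using lenmono that by auto
    moreover have "length (f j) < length (f (Suc j))" using len by auto
    ultimately show ?thesis using gpos[of i j] gpos[of j j] that Inc[of j] unfolding Inco_def by auto
  qed
  moreover obtain i j where "i < j" "g i \<le> g j" using W gB unfolding wqo_on_def by blast
  ultimately show False unfolding incomp_def by auto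
qed

lemma rank_le_inv:
  assumes "rank_le B s t"
  shows "s \<in> Inco B \<and> t \<in> Inco B \<and> (\<forall>s'. inco_child B s' s \<longrightarrow> (\<exists>t'. inco_child B t' t \<and> rank_le B s' t'))"
  using assms by (cases rule: rank_le.cases) auto

lemma rank_refl:
  assumes W: "wqo_on B" shows "s \<in> Inco B \<Longrightarrow> rank_le B s s"
proof (induction s rule: wf_induct[OF wf_chrel[OF W]])
  case (1 s)
  show ?case
  proof (rule rank_le.intros[OF 1(2) 1(2)])
    fix s' assume c: "inco_child B s' s"
    hence "s' \<in> Inco B" unfolding inco_child_def by blast
    moreover have "(s', s) \<in> chrel B" using c unfolding chrel_def by blast
    ultimately have "rank_le B s' s'" using 1(1) by blast
    thus "\<exists>t'. inco_child B t' s \<and> rank_le B s' t'" using c by blast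
  qed
qed
lemma rank_trans:
  "rank_le B s t \<Longrightarrow> rank_le B t u \<Longrightarrow> rank_le B s u"
proof (induction s t arbitrary: u rule: rank_le.induct)
  case (1 s t)
  have tu: "t \<in> Inco B \<and> u \<in> Inco B \<and> (\<forall>s'. inco_child B s' t \<longrightarrow> (\<exists>t'. inco_child B t' u \<and> rank_le B s' t'))"
    using rank_le_inv[OF 1(4)] .
  show ?case
  proof (rule rank_le.intros[OF 1(1)])
    show "u \<in> Inco B" using tu by auto
    fix s' assume "inco_child B s' s"
    then obtain t' where "inco_child B t' t" "rank_le B s' t'" "\<And>u. rank_le B t' u \<Longrightarrow> rank_le B s' u"
      using 1(3) by blast
    moreover then obtain u' where "inco_child B u' u" "rank_le B t' u'" using tu by blast
    ultimately show "\<exists>t'. inco_child B t' u \<and> rank_le B s' t'" by blast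
  qed
qed

lemma rank_total:
  assumes W: "wqo_on B"
  shows "s \<in> Inco B \<Longrightarrow> \<forall>t\<in>Inco B. rank_le B s t \<or> rank_le B t s"
proof (induction s rule: wf_induct[OF wf_chrel[OF W]])
  case (1 s)
  show ?case
  proof
    fix t assume t: "t \<in> Inco B"
    show "rank_le B s t \<or> rank_le B t s"
    proof (rule disjCI)
      assume n: "\<not> rank_le B t s"
      show "rank_le B s t"
      proof (rule rank_le.intros[OF 1(2) t])
        fix s' assume c: "inco_child B s' s"
        show "\<exists>t'. inco_child B t' t \<and> rank_le B s' t'"
        proof (rule ccontr)
          assume nn: "\<not> (\<exists>t'. inco_child B t' t \<and> rank_le B s' t')"
          have s'I: "s' \<in> Inco B" using c unfolding inco_child_def by auto
          have "rank_le B t s"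
          proof (rule rank_le.intros[OF t 1(2)])
            fix t' assume ct: "inco_child B t' t"
            hence "t' \<in> Inco B" unfolding inco_child_def by auto
            moreover have "(s', s) \<in> chrel B" using c unfolding chrel_def by blast
            ultimately have "rank_le B s' t' \<or> rank_le B t' s'" using 1(1) s'I by blast
            thus "\<exists>s''. inco_child B s'' s \<and> rank_le B t' s''" using nn ct c by blast
          qed
          thus False using n by auto
        qed
      qed
    qed
  qed
qed

lemma rank_lt_aux:
  assumes W: "wqo_on B"
  shows "s \<in> Inco B \<Longrightarrow> \<forall>t\<in>Inco B. \<not> rank_le B t s \<longrightarrow> (\<exists>t'. inco_child B t' t \<and> rank_le B s t')"
proof (induction s rule: wf_induct[OF wf_chrel[OF W]])
  case (1 s)
  show ?case
  proof (intro ballI impI)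
    fix t assume t: "t \<in> Inco B" and n: "\<not> rank_le B t s"
    obtain t' where ct: "inco_child B t' t" and nt: "\<forall>s'. inco_child B s' s \<longrightarrow> \<not> rank_le B t' s'"
    proof (rule ccontr)
      assume "\<not> thesis"
      hence "\<forall>t'. inco_child B t' t \<longrightarrow> (\<exists>s'. inco_child B s' s \<and> rank_le B t' s')" using that by blast
      hence "rank_le B t s" using rank_le.intros[OF t 1(2)] by blast
      thus False using n by auto
    qed
    have t'I: "t' \<in> Inco B" using ct unfolding inco_child_def by auto
    have "rank_le B s t'"
    proof (rule rank_le.intros[OF 1(2) t'I])
      fix s' assume cs: "inco_child B s' s"
      hence "s' \<in> Inco B" unfolding inco_child_def by auto
      moreover have "(s', s) \<in> chrel B" using cs unfolding chrel_def by auto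
      ultimately have "\<forall>t\<in>Inco B. \<not> rank_le B t s' \<longrightarrow> (\<exists>t'. inco_child B t' t \<and> rank_le B s' t')"
        using 1(1) by blast
      thus "\<exists>t''. inco_child B t'' t' \<and> rank_le B s' t''" using nt cs t'I by blast
    qed
    thus "\<exists>t'. inco_child B t' t \<and> rank_le B s t'" using ct by auto
  qed
qed

lemma rank_lt:
  assumes W: "wqo_on B" and s: "s \<in> Inco B" and t: "t \<in> Inco B" and n: "\<not> rank_le B t s"
  shows "\<exists>t'. inco_child B t' t \<and> rank_le B s t'"
  using rank_lt_aux[OF W s] t n by blast

lemma rank_child_not_aux:
  assumes W: "wqo_on B"
  shows "\<forall>t'. inco_child B t' t \<longrightarrow> \<not> rank_le B t t'"
proof (induction t rule: wf_induct[OF wf_chrel[OF W]])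
  case (1 t)
  show ?case
  proof (intro allI impI notI)
    fix t' assume c: "inco_child B t' t" and r: "rank_le B t t'"
    then obtain t'' where c2: "inco_child B t'' t'" and r2: "rank_le B t' t''" using rank_le_inv[OF r] by blast
    have "(t', t) \<in> chrel B" using c unfolding chrel_def by auto
    hence "\<forall>t''. inco_child B t'' t' \<longrightarrow> \<not> rank_le B t' t''" using 1 by blast
    thus False using c2 r2 by blast
  qed
qed

lemma rank_child_not:
  assumes W: "wqo_on B"
  shows "inco_child B t' t \<Longrightarrow> \<not> rank_le B t t'"
  using rank_child_not_aux[OF W] by blast

lemma rank_ext_aux:
  assumes W: "wqo_on B"
  shows "s \<in> Inco B \<Longrightarrow> \<forall>t w. s = t @ w \<longrightarrow> t \<in> Inco B \<longrightarrow> rank_le B s t"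
proof (induction s rule: wf_induct[OF wf_chrel[OF W]])
  case (1 s)
  show ?case
  proof (intro allI impI)
    fix t w assume sw: "s = t @ w" and t: "t \<in> Inco B"
    show "rank_le B s t"
    proof (rule rank_le.intros[OF 1(2) t])
      fix s' assume cs: "inco_child B s' s"
      then obtain y where s': "s' = s @ [y]" and s'I: "s' \<in> Inco B" unfolding inco_child_def by auto
      show "\<exists>t'. inco_child B t' t \<and> rank_le B s' t'"
      proof (cases w)
        case Nil
        hence "inco_child B s' t" using cs sw by simp
        thus ?thesis using rank_refl[OF W s'I] by blast
      next
        case (Cons x w')
        have e: "s' = (t @ [x]) @ (w' @ [y])" using s' sw Cons by simp
        have tx: "t @ [x] \<in> Inco B" using Inco_prefix[of "t @ [x]" "w' @ [y]" B] s'I unfolding e by simp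
        have "(s', s) \<in> chrel B" using cs unfolding chrel_def by blast
        hence "\<forall>t w. s' = t @ w \<longrightarrow> t \<in> Inco B \<longrightarrow> rank_le B s' t" using 1(1) s'I by blast
        hence "rank_le B s' (t @ [x])" using e tx by blast
        moreover have "inco_child B (t @ [x]) t" using t tx unfolding inco_child_def by auto
        ultimately show ?thesis by blast
      qed
    qed
  qed
qed

lemma rank_ext:
  assumes W: "wqo_on B" and "t \<in> Inco B" "t @ w \<in> Inco B"
  shows "rank_le B (t @ w) t"
proof -
  have "\<forall>t' w'. t @ w = t' @ w' \<longrightarrow> t' \<in> Inco B \<longrightarrow> rank_le B (t @ w) t'" using rank_ext_aux[OF W assms(3)] .
  thus ?thesis using assms(2) by blast
qed

lemma rank_desc:
  assumes W: "wqo_on B" and t: "t \<in> Inco B" and tw: "t @ w \<in> Inco B" and w: "w \<noteq> []"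
  shows "rank_le B (t @ w) t \<and> \<not> rank_le B t (t @ w)"
proof -
  obtain x w' where wx: "w = x # w'" using w by (cases w) auto
  have tx: "t @ [x] \<in> Inco B" using Inco_prefix[of "t @ [x]" w' B] tw wx by auto
  have c: "inco_child B (t @ [x]) t" using t tx unfolding inco_child_def by auto
  have e: "(t @ [x]) @ w' = t @ w" using wx by simp
  have r: "rank_le B (t @ w) (t @ [x])" using rank_ext[OF W tx, of w'] tw unfolding e by blast
  show ?thesis
  proof
    show "rank_le B (t @ w) t" using rank_trans[OF r rank_ext[OF W t tx]] .
    show "\<not> rank_le B t (t @ w)"
    proof
      assume "rank_le B t (t @ w)"
      from rank_trans[OF this r] show False using rank_child_not[OF W c] by blast
    qed
  qed
qed

definition SL :: "'a::preorder set \<Rightarrow> ('a list \<times> 'a list) set" where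
  "SL B = {(s,t). rank_le B s t \<and> \<not> rank_le B t s}"

lemma wf_SL:
  assumes W: "wqo_on B" shows "wf (SL B)"
proof -
  have P: "t \<in> Inco B \<Longrightarrow> \<forall>s. rank_le B s t \<longrightarrow> s \<in> Wellfounded.acc (SL B)" for t
  proof (induction t rule: wf_induct[OF wf_chrel[OF W]])
    case (1 t)
    show ?case
    proof (intro allI impI)
      fix s assume st: "rank_le B s t"
      show "s \<in> Wellfounded.acc (SL B)"
      proof (rule accI)
        fix u assume "(u, s) \<in> SL B"
        hence us: "rank_le B u s" "\<not> rank_le B s u" unfolding SL_def by auto
        have "u \<in> Inco B" "s \<in> Inco B" using rank_le_inv[OF us(1)] by auto
        then obtain s' where cs: "inco_child B s' s" and us': "rank_le B u s'"
          using rank_lt[OF W] us(2) by blast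
        obtain t' where ct: "inco_child B t' t" and st': "rank_le B s' t'" using rank_le_inv[OF st] cs by blast
        have "t' \<in> Inco B" using ct unfolding inco_child_def by auto
        moreover have "(t', t) \<in> chrel B" using ct unfolding chrel_def by blast
        ultimately show "u \<in> Wellfounded.acc (SL B)" using 1(1) rank_trans[OF us' st'] by blast
      qed
    qed
  qed
  show ?thesis
  proof (rule acc_wfI, rule allI, rule accI)
    fix x u assume "(u, x) \<in> SL B"
    hence "rank_le B u x" unfolding SL_def by auto
    moreover hence "x \<in> Inco B" using rank_le_inv by blast
    ultimately show "u \<in> Wellfounded.acc (SL B)" using P by blast
  qed
qed



definition cls :: "'a::preorder set \<Rightarrow> 'a list \<Rightarrow> 'a list set" where
  "cls B s = {t \<in> Inco B. rank_le B s t \<and> rank_le B t s}"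

lemma rank_classes_eq: "rank_classes B = cls B ` Inco B"
  unfolding rank_classes_def cls_def by blast

lemma cls_self: assumes W: "wqo_on B" and "s \<in> Inco B" shows "s \<in> cls B s"
  using rank_refl[OF W assms(2)] assms(2) unfolding cls_def by blast

lemma cls_eq:
  assumes W: "wqo_on B" and s: "s \<in> Inco B" and t: "t \<in> Inco B"
  shows "cls B s = cls B t \<longleftrightarrow> rank_le B s t \<and> rank_le B t s"
proof
  assume "cls B s = cls B t"
  hence "t \<in> cls B s" using cls_self[OF W t] by simp
  thus "rank_le B s t \<and> rank_le B t s" unfolding cls_def by blast
next
  assume "rank_le B s t \<and> rank_le B t s"
  thus "cls B s = cls B t" unfolding cls_def using rank_trans[of B] by blast
qed

lemma width_cls:
  assumes W: "wqo_on B" and s: "s \<in> Inco B" and t: "t \<in> Inco B"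
  shows "(cls B s, cls B t) \<in> width B \<longleftrightarrow> rank_le B s t"
proof
  assume "(cls B s, cls B t) \<in> width B"
  then obtain x y where x: "x \<in> cls B s" and y: "y \<in> cls B t" and xy: "rank_le B x y"
    unfolding width_def by blast
  have "rank_le B s x" using x unfolding cls_def by blast
  moreover have "rank_le B y t" using y unfolding cls_def by blast
  ultimately show "rank_le B s t" using xy rank_trans[of B] by blast
next
  assume st: "rank_le B s t"
  have "cls B s \<in> rank_classes B" "cls B t \<in> rank_classes B" using s t rank_classes_eq by auto
  thus "(cls B s, cls B t) \<in> width B" unfolding width_def using cls_self[OF W s] cls_self[OF W t] st by blast
qed

lemma rank_classesE:
  assumes "C \<in> rank_classes B" obtains s where "s \<in> Inco B" "C = cls B s"
  using assms rank_classes_eq by blast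

lemma width_sub: "width B \<subseteq> rank_classes B \<times> rank_classes B"
  unfolding width_def by blast

lemma width_refl: assumes W: "wqo_on B" and "C \<in> rank_classes B" shows "(C, C) \<in> width B"
proof -
  obtain s where "s \<in> Inco B" "C = cls B s" using rank_classesE assms(2) by blast
  thus ?thesis using width_cls[OF W] rank_refl[OF W] by blast
qed

lemma Field_width: assumes W: "wqo_on B" shows "Field (width B) = rank_classes B"
proof
  show "Field (width B) \<subseteq> rank_classes B" using width_sub unfolding Field_def by blast
  show "rank_classes B \<subseteq> Field (width B)" using width_refl[OF W] unfolding Field_def by blast
qed

lemma width_lt:
  assumes W: "wqo_on B" and s: "s \<in> Inco B" and t: "t \<in> Inco B"
  shows "(cls B s, cls B t) \<in> width B \<and> cls B s \<noteq> cls B t \<longleftrightarrow> rank_le B s t \<and> \<not> rank_le B t s"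
  using width_cls[OF W s t] cls_eq[OF W s t] by blast

lemma Well_order_width: assumes W: "wqo_on B" shows "Well_order (width B)"
proof -
  have refl: "refl_on (rank_classes B) (width B)" unfolding refl_on_def using width_refl[OF W] by blast
  have tr: "trans (width B)"
  proof (unfold trans_def, intro allI impI)
    fix C D E assume CD: "(C, D) \<in> width B" and DE: "(D, E) \<in> width B"
    obtain c where c: "c \<in> Inco B" "C = cls B c" using CD width_sub rank_classesE by blast
    obtain d where d: "d \<in> Inco B" "D = cls B d" using CD width_sub rank_classesE by blast
    obtain e where e: "e \<in> Inco B" "E = cls B e" using DE width_sub rank_classesE by blast
    have "rank_le B c d" using CD c d width_cls[OF W] by blast
    moreover have "rank_le B d e" using DE e d width_cls[OF W] by blast
    ultimately have "rank_le B c e" using rank_trans by blast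
    thus "(C, E) \<in> width B" using c e width_cls[OF W] by blast
  qed
  have an: "antisym (width B)"
  proof (unfold antisym_def, intro allI impI)
    fix C D assume CD: "(C, D) \<in> width B" and DC: "(D, C) \<in> width B"
    obtain c where c: "c \<in> Inco B" "C = cls B c" using CD width_sub rank_classesE by blast
    obtain d where d: "d \<in> Inco B" "D = cls B d" using CD width_sub rank_classesE by blast
    have "rank_le B c d" using CD c d width_cls[OF W] by blast
    moreover have "rank_le B d c" using DC c d width_cls[OF W] by blast
    ultimately show "C = D" using c d cls_eq[OF W] by blast
  qed
  have to: "total_on (rank_classes B) (width B)"
  proof (unfold total_on_def, intro ballI impI)
    fix C D assume C: "C \<in> rank_classes B" and D: "D \<in> rank_classes B"
    obtain c where c: "c \<in> Inco B" "C = cls B c" using C rank_classesE by blast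
    obtain d where d: "d \<in> Inco B" "D = cls B d" using D rank_classesE by blast
    have "rank_le B c d \<or> rank_le B d c" using rank_total[OF W c(1)] d(1) by blast
    thus "(C, D) \<in> width B \<or> (D, C) \<in> width B" using c d width_cls[OF W] by blast
  qed
  define rep where "rep C = (SOME s. s \<in> Inco B \<and> C = cls B s)" for C
  have rep: "rep C \<in> Inco B \<and> C = cls B (rep C)" if "C \<in> rank_classes B" for C
  proof -
    have "\<exists>s. s \<in> Inco B \<and> C = cls B s" using that rank_classesE by blast
    thus ?thesis unfolding rep_def by (rule someI_ex)
  qed
  have "width B - Id \<subseteq> inv_image (SL B) rep"
  proof
    fix p assume p: "p \<in> width B - Id"
    obtain C D where pCD: "p = (C, D)" by (cases p)
    have CD: "(C, D) \<in> width B" "C \<noteq> D" using p pCD by auto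
    have C: "C \<in> rank_classes B" and D: "D \<in> rank_classes B" using CD(1) width_sub by auto
    have "rank_le B (rep C) (rep D) \<and> \<not> rank_le B (rep D) (rep C)"
      using width_lt[OF W, of "rep C" "rep D"] rep[OF C] rep[OF D] CD by metis
    thus "p \<in> inv_image (SL B) rep" using pCD unfolding SL_def inv_image_def by blast
  qed
  hence wf: "wf (width B - Id)" using wf_subset[OF wf_inv_image[OF wf_SL[OF W]]] by blast
  show ?thesis
    unfolding well_order_on_def linear_order_on_def partial_order_on_def preorder_on_def Field_width[OF W]
    using refl tr an to wf width_sub by blast
qed

lemma wo_facts:
  assumes "Well_order r"
  shows "refl_on (Field r) r" "trans r" "antisym r" "total_on (Field r) r" "wf (r - Id)"
  using assms unfolding well_order_on_def linear_order_on_def partial_order_on_def preorder_on_def by blast+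

lemma osum_mem:
  "((i, x), (j, y)) \<in> osum_desc m W \<longleftrightarrow> i \<in> {1..m} \<and> j \<in> {1..m} \<and>
       x \<in> Field (W i) \<and> y \<in> Field (W j) \<and> (j < i \<or> (i = j \<and> (x, y) \<in> W i))"
  unfolding osum_desc_def by blast

lemma Field_osum:
  assumes W: "\<forall>i\<in>{1..m}. Well_order (W i)"
  shows "Field (osum_desc m W) = {(i, x). i \<in> {1..m} \<and> x \<in> Field (W i)}"
proof
  show "Field (osum_desc m W) \<subseteq> {(i, x). i \<in> {1..m} \<and> x \<in> Field (W i)}"
    unfolding Field_def osum_desc_def by blast
  show "{(i, x). i \<in> {1..m} \<and> x \<in> Field (W i)} \<subseteq> Field (osum_desc m W)"
  proof
    fix p assume "p \<in> {(i, x). i \<in> {1..m} \<and> x \<in> Field (W i)}"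
    then obtain i x where p: "p = (i, x)" "i \<in> {1..m}" "x \<in> Field (W i)" by blast
    hence "(x, x) \<in> W i" using wo_facts(1) W unfolding refl_on_def by blast
    hence "((i, x), (i, x)) \<in> osum_desc m W" unfolding osum_mem using p by blast
    hence "(p, p) \<in> osum_desc m W" using p(1) by simp
    thus "p \<in> Field (osum_desc m W)" unfolding Field_def by blast
  qed
qed

lemma Well_order_osum:
  assumes W: "\<forall>i\<in>{1..m}. Well_order (W i)"
  shows "Well_order (osum_desc m W)"
proof -
  let ?r = "osum_desc m W"
  let ?F = "{(i, x). i \<in> {1..m} \<and> x \<in> Field (W i)}"
  have refl: "refl_on ?F ?r"
    unfolding refl_on_def
  proof
    fix p assume "p \<in> ?F"
    then obtain i x where p: "p = (i, x)" "i \<in> {1..m}" "x \<in> Field (W i)" by blast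
    hence "(x, x) \<in> W i" using wo_facts(1) W unfolding refl_on_def by blast
    hence "((i, x), (i, x)) \<in> ?r" unfolding osum_mem using p by blast
    thus "(p, p) \<in> ?r" using p(1) by simp
  qed
  have tr: "trans ?r"
  proof (unfold trans_def, intro allI impI)
    fix p q s assume pq: "(p, q) \<in> ?r" and qs: "(q, s) \<in> ?r"
    obtain i x where p: "p = (i, x)" by (cases p)
    obtain j y where q: "q = (j, y)" by (cases q)
    obtain k z where s: "s = (k, z)" by (cases s)
    have "((i, x), (j, y)) \<in> ?r" using pq p q by simp
    hence 1: "i \<in> {1..m}" "j \<in> {1..m}" "x \<in> Field (W i)" "y \<in> Field (W j)" "j < i \<or> (i = j \<and> (x, y) \<in> W i)"
      unfolding osum_mem by blast+
    have "((j, y), (k, z)) \<in> ?r" using qs q s by simp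
    hence 2: "k \<in> {1..m}" "z \<in> Field (W k)" "k < j \<or> (j = k \<and> (y, z) \<in> W j)"
      unfolding osum_mem by blast+
    have "k < i \<or> (i = k \<and> (x, z) \<in> W i)"
    proof (cases "i = j \<and> j = k")
      case True
      hence "(x, y) \<in> W i" "(y, z) \<in> W i" using 1 2 by auto
      hence "(x, z) \<in> W i" using wo_facts(2) W 1(1) unfolding trans_def by blast
      thus ?thesis using True by blast
    next
      case False thus ?thesis using 1(5) 2(3) by auto
    qed
    hence "((i, x), (k, z)) \<in> ?r" unfolding osum_mem using 1 2 by blast
    thus "(p, s) \<in> ?r" using p s by simp
  qed
  have an: "antisym ?r"
  proof (unfold antisym_def, intro allI impI)
    fix p q assume pq: "(p, q) \<in> ?r" and qp: "(q, p) \<in> ?r"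
    obtain i x where p: "p = (i, x)" by (cases p)
    obtain j y where q: "q = (j, y)" by (cases q)
    have "((i, x), (j, y)) \<in> ?r" using pq p q by simp
    hence 1: "i \<in> {1..m}" "j < i \<or> (i = j \<and> (x, y) \<in> W i)" unfolding osum_mem by blast+
    have "((j, y), (i, x)) \<in> ?r" using qp p q by simp
    hence 2: "i < j \<or> (j = i \<and> (y, x) \<in> W j)" unfolding osum_mem by blast
    have ij: "i = j" using 1(2) 2 by auto
    hence "(x, y) \<in> W i" "(y, x) \<in> W i" using 1(2) 2 by auto
    hence "x = y" using wo_facts(3) W 1(1) unfolding antisym_def by blast
    thus "p = q" using p q ij by simp
  qed
  have to: "total_on ?F ?r"
  proof (unfold total_on_def, intro ballI impI)
    fix p q assume pF: "p \<in> ?F" and qF: "q \<in> ?F" and ne: "p \<noteq> q"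
    obtain i x where p: "p = (i, x)" "i \<in> {1..m}" "x \<in> Field (W i)" using pF by blast
    obtain j y where q: "q = (j, y)" "j \<in> {1..m}" "y \<in> Field (W j)" using qF by blast
    show "(p, q) \<in> ?r \<or> (q, p) \<in> ?r"
    proof (cases "i = j")
      case True
      hence "x \<noteq> y" using ne p q by simp
      hence "(x, y) \<in> W i \<or> (y, x) \<in> W i" using wo_facts(4) W p(2,3) q(3) True unfolding total_on_def by blast
      hence "((i, x), (j, y)) \<in> ?r \<or> ((j, y), (i, x)) \<in> ?r" unfolding osum_mem using p q True by blast
      thus ?thesis using p(1) q(1) by simp
    next
      case False
      hence "j < i \<or> i < j" by auto
      hence "((i, x), (j, y)) \<in> ?r \<or> ((j, y), (i, x)) \<in> ?r" unfolding osum_mem using p q by blast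
      thus ?thesis using p(1) q(1) by simp
    qed
  qed
  have sub: "?r \<subseteq> ?F \<times> ?F"
  proof
    fix p assume "p \<in> ?r"
    then obtain i x j y where p: "p = ((i, x), (j, y))" "((i, x), (j, y)) \<in> ?r" by (cases p) auto
    hence "i \<in> {1..m}" "j \<in> {1..m}" "x \<in> Field (W i)" "y \<in> Field (W j)" unfolding osum_mem by blast+
    thus "p \<in> ?F \<times> ?F" using p by blast
  qed
  define S where "S = {((i, x), (j, y)). i = j \<and> i \<in> {1..m} \<and> (x, y) \<in> W i - Id}"
  have wfS: "wf S"
  proof (rule ccontr)
    assume "\<not> wf S"
    then obtain f where f: "\<And>n. (f (Suc n), f n) \<in> S" unfolding wf_iff_no_infinite_down_chain by blast
    have fst: "fst (f n) = fst (f 0)" for n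
    proof (induction n)
      case 0 thus ?case by simp
    next
      case (Suc n) thus ?case using f[of n] unfolding S_def by auto
    qed
    define i where "i = fst (f 0)"
    have "i \<in> {1..m}" using f[of 0] unfolding S_def i_def by auto
    hence w: "wf (W i - Id)" using wo_facts(5) W by blast
    have ch: "(snd (f (Suc n)), snd (f n)) \<in> W i - Id" for n
      using f[of n] fst[of n] fst[of "Suc n"] unfolding S_def i_def by auto
    have "\<forall>n. ((snd \<circ> f) (Suc n), (snd \<circ> f) n) \<in> W i - Id" using ch by simp
    thus False using w unfolding wf_iff_no_infinite_down_chain by blast
  qed
  have "?r - Id \<subseteq> (\<lambda>(i, x). m - i) <*mlex*> S"
  proof
    fix p assume pr: "p \<in> ?r - Id"
    obtain i x j y where p: "p = ((i, x), (j, y))" by (cases p) auto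
    have "((i, x), (j, y)) \<in> ?r" using pr p by simp
    hence 1: "i \<in> {1..m}" "j \<in> {1..m}" "j < i \<or> (i = j \<and> (x, y) \<in> W i)" unfolding osum_mem by blast+
    have ne: "(i, x) \<noteq> (j, y)" using pr p by auto
    show "p \<in> (\<lambda>(i, x). m - i) <*mlex*> S"
    proof (cases "j < i")
      case True
      hence "m - i < m - j" using 1 by auto
      thus ?thesis unfolding p mlex_iff by simp
    next
      case False
      hence "i = j" "(x, y) \<in> W i" using 1 by auto
      hence "((i, x), (j, y)) \<in> S" using ne 1 unfolding S_def by auto
      thus ?thesis unfolding p mlex_iff using \<open>i = j\<close> by simp
    qed
  qed
  hence wf: "wf (?r - Id)" using wf_subset[OF wf_mlex[OF wfS]] by blast
  show ?thesis
    unfolding well_order_on_def linear_order_on_def partial_order_on_def preorder_on_def Field_osum[OF W]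
    using refl tr an to wf sub by blast
qed

lemma strict_mono_ge:
  assumes W: "Well_order r"
    and hF: "\<And>x. x \<in> Field r \<Longrightarrow> h x \<in> Field r"
    and hm: "\<And>x y. (x, y) \<in> r \<Longrightarrow> x \<noteq> y \<Longrightarrow> (h x, h y) \<in> r \<and> h x \<noteq> h y"
  shows "x \<in> Field r \<Longrightarrow> (x, h x) \<in> r"
proof (induction x rule: wf_induct[OF wo_facts(5)[OF W]])
  case (1 x)
  show ?case
  proof (rule ccontr)
    assume n: "(x, h x) \<notin> r"
    have hx: "h x \<in> Field r" using hF 1(2) .
    have ne: "h x \<noteq> x"
    proof
      assume "h x = x"
      hence "(x, h x) \<in> r" using wo_facts(1)[OF W] 1(2) unfolding refl_on_def by simp
      thus False using n by blast
    qed
    hence lt: "(h x, x) \<in> r" using n wo_facts(4)[OF W] 1(2) hx unfolding total_on_def by blast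
    hence "(h (h x), h x) \<in> r \<and> h (h x) \<noteq> h x" using hm ne by blast
    moreover have "(h x, h (h x)) \<in> r" using 1(1) lt ne hx by blast
    ultimately show False using wo_facts(3)[OF W] unfolding antisym_def by blast
  qed
qed

lemma mono_ordLeq:
  assumes Wr: "Well_order r" and Wr': "Well_order r'"
    and gF: "\<And>x. x \<in> Field r \<Longrightarrow> g x \<in> Field r'"
    and gm: "\<And>x y. (x, y) \<in> r \<Longrightarrow> x \<noteq> y \<Longrightarrow> (g x, g y) \<in> r' \<and> g x \<noteq> g y"
  shows "(r, r') \<in> ordLeq"
proof -
  have "(r', r) \<in> ordLess \<or> (r, r') \<in> ordLeq" using ordLess_or_ordLeq[OF Wr' Wr] .
  moreover have "(r', r) \<notin> ordLess"
  proof
    assume "(r', r) \<in> ordLess"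
    then obtain f where "embedS r' r f" unfolding ordLess_def by blast
    hence emb: "embed r' r f" and nb: "\<not> bij_betw f (Field r') (Field r)"
      unfolding embedS_def by blast+
    have inj: "inj_on f (Field r')" using embed_inj_on[OF Wr' emb] .
    have sub: "f ` Field r' \<subseteq> Field r" using embed_Field[OF emb] .
    have ne: "f ` Field r' \<noteq> Field r" using nb inj unfolding bij_betw_def by blast
    have "ofilter r (f ` Field r')" using embed_Field_ofilter[OF Wr' Wr emb] .
    hence "(\<exists>a\<in>Field r. f ` Field r' = underS r a) \<or> f ` Field r' = Field r"
      using wo_rel.ofilter_underS_Field[of r "f ` Field r'"] Wr unfolding wo_rel_def by blast
    then obtain a where aF: "a \<in> Field r" and ua: "underS r a = f ` Field r'"
      using ne by metis
    define h where "h x = f (g x)" for x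
    have hF: "h x \<in> Field r" if "x \<in> Field r" for x using sub gF that unfolding h_def by blast
    have cmp: "(x, y) \<in> r' \<Longrightarrow> (f x, f y) \<in> r" for x y using embed_compat[OF emb] unfolding compat_def by blast
    have hm: "(h x, h y) \<in> r \<and> h x \<noteq> h y" if "(x, y) \<in> r" "x \<noteq> y" for x y
    proof -
      have xy: "x \<in> Field r" "y \<in> Field r" using that unfolding Field_def by blast+
      have "(g x, g y) \<in> r'" "g x \<noteq> g y" using gm that by blast+
      moreover have "g x \<in> Field r'" "g y \<in> Field r'" using gF xy by blast+
      ultimately show ?thesis using cmp inj unfolding h_def inj_on_def by blast
    qed
    have "(a, h a) \<in> r" using strict_mono_ge[of r h a, OF Wr hF hm aF] by blast
    moreover have "h a \<in> underS r a" using ua gF aF unfolding h_def by blast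
    ultimately show False using wo_facts(3)[OF Wr] unfolding underS_def antisym_def by blast
  qed
  ultimately show ?thesis by blast
qed

lemma sim_ordLeq:
  assumes Wr: "Well_order r" and Wr': "Well_order r'"
    and ex: "\<And>a. a \<in> Field r \<Longrightarrow> \<exists>b\<in>Field r'. R a b"
    and step: "\<And>a b a'. a \<in> Field r \<Longrightarrow> R a b \<Longrightarrow> b \<in> Field r' \<Longrightarrow> (a', a) \<in> r \<Longrightarrow> a' \<noteq> a \<Longrightarrow>
         \<exists>b'\<in>Field r'. (b', b) \<in> r' \<and> b' \<noteq> b \<and> R a' b'"
  shows "(r, r') \<in> ordLeq"
proof -
  define g where "g a = (SOME b. b \<in> Field r' \<and> R a b \<and> (\<forall>b'\<in>Field r'. R a b' \<longrightarrow> (b, b') \<in> r'))" for a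
  have gp: "g a \<in> Field r' \<and> R a (g a) \<and> (\<forall>b'\<in>Field r'. R a b' \<longrightarrow> (g a, b') \<in> r')" if aF: "a \<in> Field r" for a
  proof -
    obtain b0 where b0: "b0 \<in> Field r'" "R a b0" using ex aF by blast
    obtain z where z: "z \<in> {b \<in> Field r'. R a b}" and zm: "\<And>y. (y, z) \<in> r' - Id \<Longrightarrow> y \<notin> {b \<in> Field r'. R a b}"
      using wfE_min[OF wo_facts(5)[OF Wr'], of b0 "{b \<in> Field r'. R a b}"] b0 by blast
    have "\<forall>b'\<in>Field r'. R a b' \<longrightarrow> (z, b') \<in> r'"
    proof (intro ballI impI)
      fix b' assume b': "b' \<in> Field r'" "R a b'"
      show "(z, b') \<in> r'"
      proof (cases "b' = z")
        case True thus ?thesis using wo_facts(1)[OF Wr'] b' unfolding refl_on_def by blast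
      next
        case False
        hence "(b', z) \<notin> r'" using zm b' by blast
        thus ?thesis using wo_facts(4)[OF Wr'] b' z False unfolding total_on_def by blast
      qed
    qed
    hence "\<exists>b. b \<in> Field r' \<and> R a b \<and> (\<forall>b'\<in>Field r'. R a b' \<longrightarrow> (b, b') \<in> r')" using z by blast
    thus ?thesis unfolding g_def by (rule someI_ex)
  qed
  show ?thesis
  proof (rule mono_ordLeq[of r r' g, OF Wr Wr'])
    show "g x \<in> Field r'" if "x \<in> Field r" for x using gp that by blast
    fix x y assume xy: "(x, y) \<in> r" "x \<noteq> y"
    have F: "x \<in> Field r" "y \<in> Field r" using xy unfolding Field_def by blast+
    obtain b' where b': "b' \<in> Field r'" "(b', g y) \<in> r'" "b' \<noteq> g y" "R x b'"
      using step[OF F(2), of "g y" x] gp[OF F(2)] xy by blast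
    have gxb: "(g x, b') \<in> r'" using gp[OF F(1)] b' by blast
    have "(g x, g y) \<in> r'" using gxb b'(2) wo_facts(2)[OF Wr'] unfolding trans_def by blast
    moreover have "g x \<noteq> g y"
    proof
      assume "g x = g y"
      hence "(g y, b') \<in> r'" using gxb by simp
      thus False using b'(2,3) wo_facts(3)[OF Wr'] unfolding antisym_def by blast
    qed
    ultimately show "(g x, g y) \<in> r' \<and> g x \<noteq> g y" by blast
  qed
qed

lemma incomp_irrefl: "\<not> incomp x x" unfolding incomp_def by auto

lemma Inco_snoc:
  assumes t: "t \<in> Inco B" and z: "z \<in> B" and inc: "\<forall>y\<in>set t. incomp z y"
  shows "t @ [z] \<in> Inco B"
proof -
  have h: "t \<noteq> []" "set t \<subseteq> B" "distinct t" "\<forall>x\<in>set t. \<forall>y\<in>set t. x \<noteq> y \<longrightarrow> incomp x y"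
    using t unfolding Inco_iff by blast+
  have "z \<notin> set t" using inc incomp_irrefl by blast
  moreover have "\<forall>x\<in>set (t @ [z]). \<forall>y\<in>set (t @ [z]). x \<noteq> y \<longrightarrow> incomp x y"
    using h(4) inc by (auto intro: incomp_sym)
  ultimately show ?thesis unfolding Inco_iff using h z by simp
qed

lemma Inco_append:
  assumes t: "t \<in> Inco B" and v: "v \<in> Inco B" and inc: "\<forall>x\<in>set t. \<forall>y\<in>set v. incomp x y"
  shows "t @ v \<in> Inco B"
proof -
  have h: "t \<noteq> []" "set t \<subseteq> B" "distinct t" "\<forall>x\<in>set t. \<forall>y\<in>set t. x \<noteq> y \<longrightarrow> incomp x y"
    using t unfolding Inco_iff by blast+
  have g: "v \<noteq> []" "set v \<subseteq> B" "distinct v" "\<forall>x\<in>set v. \<forall>y\<in>set v. x \<noteq> y \<longrightarrow> incomp x y"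
    using v unfolding Inco_iff by blast+
  have "set t \<inter> set v = {}" using inc incomp_irrefl by blast
  moreover have "\<forall>x\<in>set (t @ v). \<forall>y\<in>set (t @ v). x \<noteq> y \<longrightarrow> incomp x y"
    using h(4) g(4) inc by (auto intro: incomp_sym)
  ultimately show ?thesis unfolding Inco_iff using h g by simp
qed

lemma Inco_map:
  assumes u: "u \<in> Inco B" and sub: "\<phi> ` B \<subseteq> B'"
    and pres: "\<forall>x\<in>B. \<forall>y\<in>B. incomp x y \<longrightarrow> incomp (\<phi> x) (\<phi> y)"
  shows "map \<phi> u \<in> Inco B'"
proof -
  have h: "u \<noteq> []" "set u \<subseteq> B" "distinct u" "\<forall>x\<in>set u. \<forall>y\<in>set u. x \<noteq> y \<longrightarrow> incomp x y"
    using u unfolding Inco_iff by blast+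
  have inc: "\<forall>x\<in>set u. \<forall>y\<in>set u. x \<noteq> y \<longrightarrow> incomp (\<phi> x) (\<phi> y)" using h(2,4) pres by blast
  have "inj_on \<phi> (set u)" unfolding inj_on_def using inc incomp_irrefl by metis
  hence "distinct (map \<phi> u)" using h(3) by (simp add: distinct_map)
  moreover have "\<forall>x\<in>set (map \<phi> u). \<forall>y\<in>set (map \<phi> u). x \<noteq> y \<longrightarrow> incomp x y" using inc by auto
  moreover have "set (map \<phi> u) \<subseteq> B'" using h(2) sub by auto
  ultimately show ?thesis unfolding Inco_iff using h(1) by simp
qed

lemma Inco_mono: "B \<subseteq> B' \<Longrightarrow> s \<in> Inco B \<Longrightarrow> s \<in> Inco B'"
  unfolding Inco_def by blast

lemma Inco_last: assumes "u @ [x] \<in> Inco B" shows "\<forall>y\<in>set u. incomp x y"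
proof -
  have "distinct (u @ [x])" "\<forall>a\<in>set (u @ [x]). \<forall>b\<in>set (u @ [x]). a \<noteq> b \<longrightarrow> incomp a b"
    using assms unfolding Inco_iff by blast+
  thus ?thesis by auto
qed

lemma iso_incomp:
  assumes "order_isomorphic S T"
  obtains \<psi> where "\<psi> ` S = T" "\<forall>x\<in>S. \<forall>y\<in>S. incomp x y \<longrightarrow> incomp (\<psi> x) (\<psi> y)"
proof -
  obtain f where f: "bij_betw f S T" "\<forall>x\<in>S. \<forall>y\<in>S. x \<le> y \<longleftrightarrow> f x \<le> f y"
    using assms unfolding order_isomorphic_def by blast
  have "f ` S = T" using f(1) unfolding bij_betw_def by blast
  moreover have "\<forall>x\<in>S. \<forall>y\<in>S. incomp x y \<longrightarrow> incomp (f x) (f y)" using f(2) unfolding incomp_def by blast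
  ultimately show ?thesis using that by blast
qed

definition good :: "'a::preorder set \<Rightarrow> (nat \<Rightarrow> 'a set) \<Rightarrow> nat \<Rightarrow> 'a list set \<Rightarrow> 'a list \<Rightarrow> bool" where
  "good A Af k C t \<longleftrightarrow> (\<exists>p u \<phi>. t = p @ map \<phi> u \<and> t \<in> Inco A \<and> set p \<subseteq> (\<Union>j\<in>{1..<k}. Af j) \<and>
      u \<in> Inco (Af k) \<and> (\<exists>c\<in>C. rank_le (Af k) c u) \<and> \<phi> ` Af k \<subseteq> Af k \<and>
      (\<forall>x\<in>Af k. \<forall>y\<in>Af k. incomp x y \<longrightarrow> incomp (\<phi> x) (\<phi> y)) \<and>
      (\<forall>x\<in>Af k. \<forall>y\<in>set p. incomp (\<phi> x) y))"

lemma qif_sub: "quasi_incomparable_family A m Af \<Longrightarrow> k \<in> {1..m} \<Longrightarrow> Af k \<subseteq> A"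
  unfolding quasi_incomparable_family_def by blast

lemma qif_iso:
  assumes "quasi_incomparable_family A m Af" "k \<in> {1..m}" "finite Y" "Y \<subseteq> (\<Union>j\<in>{1..<k}. Af j)"
  obtains \<psi> where "\<psi> ` Af k \<subseteq> Af k" "\<forall>x\<in>Af k. \<forall>y\<in>Af k. incomp x y \<longrightarrow> incomp (\<psi> x) (\<psi> y)"
    "\<forall>x\<in>Af k. \<forall>y\<in>Y. incomp (\<psi> x) y"
proof -
  obtain A' where A': "A' \<subseteq> Af k" "order_isomorphic (Af k) A'" "set_incomp A' Y"
    using assms unfolding quasi_incomparable_family_def by blast
  obtain \<psi> where p1: "\<psi> ` Af k = A'" and p2: "\<forall>x\<in>Af k. \<forall>y\<in>Af k. incomp x y \<longrightarrow> incomp (\<psi> x) (\<psi> y)"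
    using iso_incomp[OF A'(2)] by blast
  have q1: "\<psi> ` Af k \<subseteq> Af k" using p1 A'(1) by simp
  have q3: "\<forall>x\<in>Af k. \<forall>y\<in>Y. incomp (\<psi> x) y"
  proof (intro ballI)
    fix x y assume "x \<in> Af k" "y \<in> Y"
    hence "\<psi> x \<in> A'" using p1 by blast
    thus "incomp (\<psi> x) y" using A'(3) \<open>y \<in> Y\<close> unfolding set_incomp_def by blast
  qed
  show ?thesis by (rule that[OF q1 p2 q3])
qed

lemma wqo_sub: "wqo_on A \<Longrightarrow> B \<subseteq> A \<Longrightarrow> wqo_on B"
  unfolding wqo_on_def by blast

lemma cls_of_mem:
  assumes W: "wqo_on B" and C: "C \<in> rank_classes B" and c: "c \<in> C"
  shows "c \<in> Inco B \<and> C = cls B c"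
proof -
  obtain c0 where c0: "c0 \<in> Inco B" "C = cls B c0" using rank_classesE C by blast
  have cI: "c \<in> Inco B" "rank_le B c0 c" "rank_le B c c0" using c c0 unfolding cls_def by blast+
  thus ?thesis using cls_eq[OF W c0(1) cI(1)] c0(2) by blast
qed

lemma step_same:
  assumes W: "wqo_on A" and Q: "quasi_incomparable_family A m Af" and k: "k \<in> {1..m}"
    and g: "good A Af k C t" and C: "C \<in> rank_classes (Af k)" and C': "C' \<in> rank_classes (Af k)"
    and CC: "(C', C) \<in> width (Af k)" "C' \<noteq> C"
  shows "\<exists>w. w \<noteq> [] \<and> t @ w \<in> Inco A \<and> good A Af k C' (t @ w)"
proof -
  have Wk: "wqo_on (Af k)" using wqo_sub[OF W qif_sub[OF Q k]] .
  obtain p u \<phi> c where t: "t = p @ map \<phi> u" "t \<in> Inco A" "set p \<subseteq> (\<Union>j\<in>{1..<k}. Af j)"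
      "u \<in> Inco (Af k)" "c \<in> C" "rank_le (Af k) c u" "\<phi> ` Af k \<subseteq> Af k"
      "\<forall>x\<in>Af k. \<forall>y\<in>Af k. incomp x y \<longrightarrow> incomp (\<phi> x) (\<phi> y)"
      "\<forall>x\<in>Af k. \<forall>y\<in>set p. incomp (\<phi> x) y"
    using g unfolding good_def by blast
  have cC: "c \<in> Inco (Af k)" "C = cls (Af k) c" using cls_of_mem[OF Wk C t(5)] by blast+
  obtain c' where c': "c' \<in> Inco (Af k)" "C' = cls (Af k) c'" using rank_classesE C' by blast
  have lt: "rank_le (Af k) c' c \<and> \<not> rank_le (Af k) c c'" using width_lt[OF Wk c'(1) cC(1)] CC cC(2) c'(2) by blast
  obtain c'' where c'': "inco_child (Af k) c'' c" "rank_le (Af k) c' c''"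
    using rank_lt[OF Wk c'(1) cC(1)] lt by blast
  obtain u' where u': "inco_child (Af k) u' u" "rank_le (Af k) c'' u'"
    using rank_le_inv[OF t(6)] c''(1) by blast
  obtain x where ux: "u' = u @ [x]" "u' \<in> Inco (Af k)" using u'(1) unfolding inco_child_def by blast
  have xk: "x \<in> Af k" using ux unfolding Inco_def by auto
  have c'u': "rank_le (Af k) c' u'" using rank_trans[OF c''(2) u'(2)] .
  have AkA: "Af k \<subseteq> A" using qif_sub[OF Q k] .
  have inc: "\<forall>y\<in>set t. incomp (\<phi> x) y"
  proof
    fix y assume "y \<in> set t"
    hence "y \<in> set p \<or> y \<in> \<phi> ` set u" using t(1) by auto
    thus "incomp (\<phi> x) y"
    proof
      assume "y \<in> set p" thus ?thesis using t(9) xk by blast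
    next
      assume "y \<in> \<phi> ` set u"
      then obtain v where v: "v \<in> set u" "y = \<phi> v" by blast
      have "incomp x v" using Inco_last[OF ux(2)[unfolded ux(1)]] v(1) by blast
      moreover have "v \<in> Af k" using v(1) t(4) unfolding Inco_def by blast
      ultimately show ?thesis using t(8) xk v(2) by blast
    qed
  qed
  have new: "t @ [\<phi> x] \<in> Inco A" using Inco_snoc[OF t(2) _ inc] t(7) xk AkA by blast
  have eq: "t @ [\<phi> x] = p @ map \<phi> u'" using t(1) ux(1) by simp
  have "good A Af k C' (t @ [\<phi> x])" unfolding good_def
    using eq new t(3) ux(2) c'u' cls_self[OF Wk c'(1)] c'(2) t(7,8,9) by blast
  thus ?thesis using new by blast
qed

lemma step_up:
  assumes W: "wqo_on A" and Q: "quasi_incomparable_family A m Af" and k: "k \<in> {1..m}" and j: "j \<in> {1..m}"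
    and kj: "k < j" and g: "good A Af k C t" and C': "C' \<in> rank_classes (Af j)"
  shows "\<exists>w. w \<noteq> [] \<and> t @ w \<in> Inco A \<and> good A Af j C' (t @ w)"
proof -
  have Wj: "wqo_on (Af j)" using wqo_sub[OF W qif_sub[OF Q j]] .
  obtain p u \<phi> where t: "t = p @ map \<phi> u" "t \<in> Inco A" "set p \<subseteq> (\<Union>j\<in>{1..<k}. Af j)"
      "u \<in> Inco (Af k)" "\<phi> ` Af k \<subseteq> Af k"
    using g unfolding good_def by blast
  have "set (map \<phi> u) \<subseteq> Af k" using t(4,5) unfolding Inco_def by auto
  moreover have "k \<in> {1..<j}" using k kj by auto
  ultimately have s1: "set (map \<phi> u) \<subseteq> (\<Union>i\<in>{1..<j}. Af i)" by blast
  have "{1..<k} \<subseteq> {1..<j}" using kj by auto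
  hence "(\<Union>i\<in>{1..<k}. Af i) \<subseteq> (\<Union>i\<in>{1..<j}. Af i)" by blast
  hence st: "set t \<subseteq> (\<Union>i\<in>{1..<j}. Af i)" using s1 t(1,3) by auto
  obtain \<psi> where \<psi>: "\<psi> ` Af j \<subseteq> Af j" "\<forall>x\<in>Af j. \<forall>y\<in>Af j. incomp x y \<longrightarrow> incomp (\<psi> x) (\<psi> y)"
    "\<forall>x\<in>Af j. \<forall>y\<in>set t. incomp (\<psi> x) y"
    by (rule qif_iso[OF Q j List.finite_set st])
  obtain c' where c': "c' \<in> Inco (Af j)" "C' = cls (Af j) c'" using rank_classesE C' by blast
  have AjA: "Af j \<subseteq> A" using qif_sub[OF Q j] .
  have w: "map \<psi> c' \<in> Inco A" using Inco_map[OF c'(1) _ \<psi>(2), of A] \<psi>(1) AjA by blast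
  have "\<forall>x\<in>set t. \<forall>y\<in>set (map \<psi> c'). incomp x y"
  proof (intro ballI)
    fix x y assume x: "x \<in> set t" and "y \<in> set (map \<psi> c')"
    then obtain v where v: "v \<in> set c'" "y = \<psi> v" by auto
    have "v \<in> Af j" using v(1) c'(1) unfolding Inco_def by blast
    thus "incomp x y" using \<psi>(3) x v(2) incomp_sym by blast
  qed
  hence new: "t @ map \<psi> c' \<in> Inco A" using Inco_append[OF t(2) w] by blast
  have "good A Af j C' (t @ map \<psi> c')" unfolding good_def
    using new st c'(1) rank_refl[OF Wj c'(1)] cls_self[OF Wj c'(1)] c'(2) \<psi> by blast
  moreover have "map \<psi> c' \<noteq> []" using c'(1) unfolding Inco_def by auto
  ultimately show ?thesis using new by blast
qed

theorem mainTheorem2: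
  fixes A :: "'a::preorder set" and m :: nat and Af :: "nat \<Rightarrow> 'a set"
  assumes "wqo_on A"
    and "quasi_incomparable_family A m Af"
  shows "(osum_desc m (\<lambda>i. width (Af i)), width A) \<in> ordLeq"
proof -
  note W = assms(1) and Q = assms(2)
  have Wk: "wqo_on (Af k)" if "k \<in> {1..m}" for k using wqo_sub[OF W qif_sub[OF Q that]] .
  have WO: "\<forall>i\<in>{1..m}. Well_order (width (Af i))" using Well_order_width Wk by blast
  have FO: "Field (osum_desc m (\<lambda>i. width (Af i))) = {(i, x). i \<in> {1..m} \<and> x \<in> rank_classes (Af i)}"
    using Field_osum[OF WO] Field_width[OF Wk] by auto
  show ?thesis
  proof (rule sim_ordLeq[OF Well_order_osum[OF WO] Well_order_width[OF W],
        of "\<lambda>a D. \<exists>t. D = cls A t \<and> t \<in> Inco A \<and> good A Af (fst a) (snd a) t"])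
    fix a assume aF: "a \<in> Field (osum_desc m (\<lambda>i. width (Af i)))"
    then obtain k C where a: "a = (k, C)" "k \<in> {1..m}" "C \<in> rank_classes (Af k)" using FO by blast
    obtain c where c: "c \<in> Inco (Af k)" "C = cls (Af k) c" using rank_classesE a(3) by blast
    obtain \<psi> where \<psi>: "\<psi> ` Af k \<subseteq> Af k" "\<forall>x\<in>Af k. \<forall>y\<in>Af k. incomp x y \<longrightarrow> incomp (\<psi> x) (\<psi> y)"
      "\<forall>x\<in>Af k. \<forall>y\<in>{}. incomp (\<psi> x) y"
      by (rule qif_iso[OF Q a(2) finite.emptyI empty_subsetI])
    have tI: "map \<psi> c \<in> Inco A" using Inco_map[OF c(1) _ \<psi>(2), of A] \<psi>(1) qif_sub[OF Q a(2)] by blast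
    have cC: "c \<in> C" using cls_self[OF Wk[OF a(2)] c(1)] c(2) by simp
    have ex: "\<exists>c'\<in>C. rank_le (Af k) c' c" using cC rank_refl[OF Wk[OF a(2)] c(1)] by blast
    have "good A Af k C ([] @ map \<psi> c)" unfolding good_def
      apply (rule exI[of _ "[]"], rule exI[of _ c], rule exI[of _ \<psi>])
      using tI c(1) \<psi>(1,2) ex by simp
    moreover have "cls A (map \<psi> c) \<in> Field (width A)" using Field_width[OF W] rank_classes_eq tI by blast
    ultimately show "\<exists>b\<in>Field (width A). \<exists>t. b = cls A t \<and> t \<in> Inco A \<and> good A Af (fst a) (snd a) t"
      using a(1) tI by auto
  next
    fix a b a'
    assume aF: "a \<in> Field (osum_desc m (\<lambda>i. width (Af i)))"
      and R: "\<exists>t. b = cls A t \<and> t \<in> Inco A \<and> good A Af (fst a) (snd a) t"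
      and bF: "b \<in> Field (width A)"
      and aa: "(a', a) \<in> osum_desc m (\<lambda>i. width (Af i))" and ne: "a' \<noteq> a"
    obtain k C where a: "a = (k, C)" "k \<in> {1..m}" "C \<in> rank_classes (Af k)" using aF FO by blast
    obtain j C' where a': "a' = (j, C')" by (cases a')
    obtain t where t: "b = cls A t" "t \<in> Inco A" "good A Af k C t" using R a(1) by auto
    have "((j, C'), (k, C)) \<in> osum_desc m (\<lambda>i. width (Af i))" using aa a(1) a' by simp
    hence o: "j \<in> {1..m}" "C' \<in> Field (width (Af j))" "k < j \<or> (j = k \<and> (C', C) \<in> width (Af j))"
      unfolding osum_mem by blast+
    have C': "C' \<in> rank_classes (Af j)" using o(2) Field_width[OF Wk[OF o(1)]] by simp
    have "\<exists>w. w \<noteq> [] \<and> t @ w \<in> Inco A \<and> good A Af j C' (t @ w)"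
    proof (cases "k < j")
      case True
      thus ?thesis using step_up[OF W Q a(2) o(1) True t(3) C'] by blast
    next
      case False
      hence jk: "j = k" "(C', C) \<in> width (Af k)" using o(3) by auto
      have "C' \<noteq> C" using ne a(1) a' jk(1) by auto
      thus ?thesis using step_same[OF W Q a(2) t(3) a(3) _ jk(2)] C' jk(1) by blast
    qed
    then obtain w where w: "w \<noteq> []" "t @ w \<in> Inco A" "good A Af j C' (t @ w)" by blast
    have d: "rank_le A (t @ w) t \<and> \<not> rank_le A t (t @ w)" using rank_desc[OF W t(2) w(2) w(1)] .
    have lt: "(cls A (t @ w), cls A t) \<in> width A \<and> cls A (t @ w) \<noteq> cls A t"
      using width_lt[OF W w(2) t(2)] d by blast
    have "cls A (t @ w) \<in> Field (width A)" using Field_width[OF W] rank_classes_eq w(2) by blast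
    thus "\<exists>b'\<in>Field (width A). (b', b) \<in> width A \<and> b' \<noteq> b \<and>
             (\<exists>t. b' = cls A t \<and> t \<in> Inco A \<and> good A Af (fst a') (snd a') t)"
      using lt t(1) w a' by auto
  qed
qed

end
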